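(* Let $\mathcal X$ be a finite set and let $\mathcal C$ be a set of probability measures on $(\mathcal X^\infty,\mathcal F)$. Suppose there is a probability measure $\rho$ on $(\mathcal X^\infty,\mathcal F)$ such that $\rho$ predicts every $\mu\in\mathcal C$ in total variation. Then there is a sequence $\mu_k\in\mathcal C$, $k\in\mathbb N$, such that for any positive weights $w_k$, $k\in\mathbb N$, with $\sum_{k\in\mathbb N} w_k=1$, the measure $\nu:=\sum_{k\in\mathbb N} w_k\mu_k$ predicts every $\mu\in\mathcal C$ in total variation.
   Context: $\mathcal X^\infty$ is the set of one-way infinite sequences $x_1,x_2,\dots$ with $x_i\in\mathcal X$, and $\mathcal F$ is the sigma-field generated by the cylinder sets $[x_{1..n}]$ (all infinite sequences starting with $x_1,\dots,x_n$), $n\in\mathbb N$. For probability measures $\mu,\rho$ on $(\mathcal X^\infty,\mathcal F)$ and $x_{1..n}=x_1,\dots,x_n$, the total variation distance is $v(\mu,\rho,x_{1..n}):=\sup_{A\in\mathcal F}|\rho(A\mid x_{1..n})-\mu(A\mid x_{1..n})|$, where conditioning is on the event that the sequence starts with $x_{1..n}$. We say $\rho$ predicts $\mu$ in total variation if $v(\mu,\rho,x_{1..n})\to 0$ as $n\to\infty$ for $\mu$-almost every sequence $x_1,x_2,\dots$. *)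

theory Defs
  imports "HOL-Probability.Probability" "HOL-Library.Stream"
begin

definition cyl :: "'a list \<Rightarrow> 'a stream set" where
  "cyl xs = {\<omega>. stake (length xs) \<omega> = xs}"

definition cyl_sets :: "'a stream set set" where
  "cyl_sets = sigma_sets UNIV (range cyl)"

definition seq_prob :: "'a stream measure \<Rightarrow> bool" where
  "seq_prob M \<longleftrightarrow> prob_space M \<and> space M = UNIV \<and> sets M = cyl_sets"

text \<open>Conditional probability of A given that the sequence starts with xs.
  (Division by zero yields 0, by the HOL convention.)\<close>
definition cond_prob :: "'a stream measure \<Rightarrow> 'a stream set \<Rightarrow> 'a list \<Rightarrow> real" where
  "cond_prob M A xs = measure M (A \<inter> cyl xs) / measure M (cyl xs)"

definition tv_dist :: "'a stream measure \<Rightarrow> 'a stream measure \<Rightarrow> 'a list \<Rightarrow> real" where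
  "tv_dist \<mu> \<rho> xs = (SUP A\<in>cyl_sets. \<bar>cond_prob \<rho> A xs - cond_prob \<mu> A xs\<bar>)"

definition predicts_tv :: "'a stream measure \<Rightarrow> 'a stream measure \<Rightarrow> bool" where
  "predicts_tv \<rho> \<mu> \<longleftrightarrow> (AE \<omega> in \<mu>. (\<lambda>n. tv_dist \<mu> \<rho> (stake n \<omega>)) \<longlonglongrightarrow> 0)"

definition mixture :: "(nat \<Rightarrow> real) \<Rightarrow> (nat \<Rightarrow> 'a stream measure) \<Rightarrow> 'a stream measure" where
  "mixture w \<mu> = measure_of UNIV cyl_sets (\<lambda>A. \<Sum>k. ennreal (w k) * emeasure (\<mu> k) A)"

end

theory Submission
  imports Defs
begin

lemma sigma_algebra_cyl_sets: "sigma_algebra UNIV cyl_sets"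
  unfolding cyl_sets_def by (rule sigma_algebra_sigma_sets) auto

lemma cyl_in_cyl_sets[simp]: "cyl x \<in> cyl_sets"
  unfolding cyl_sets_def by (rule sigma_sets.Basic) auto

lemma finite_len_lists: "finite {x::('a::finite) list. length x = m}"
  using finite_lists_length_eq[of "UNIV :: 'a set" m] by simp

lemma stake_vimage_union:
  "stake m -` S = (\<Union>x\<in>{x\<in>S. length x = m}. cyl x)"
  unfolding cyl_def by auto

lemma stake_vimage_in[simp]: "stake m -` (S :: ('a::finite) list set) \<in> cyl_sets"
proof -
  interpret sigma_algebra UNIV cyl_sets by (rule sigma_algebra_cyl_sets)
  have "finite {x\<in>S. length x = m}"
    by (rule finite_subset[OF _ finite_len_lists[of m]]) auto
  then have "(\<Union>x\<in>{x\<in>S. length x = m}. cyl x) \<in> cyl_sets"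
    by auto
  then show ?thesis by (simp add: stake_vimage_union)
qed

definition gen :: "('a list set) \<Rightarrow> nat \<Rightarrow> 'a stream set" where
  "gen S m = stake m -` S"

definition Gens :: "'a stream set set" where
  "Gens = {stake m -` S | m S. True}"

lemma cyl_as_vimage: "cyl x = stake (length x) -` {x}"
  unfolding cyl_def by auto

lemma cyl_sets_Gens: "cyl_sets = sigma_sets UNIV (Gens :: ('a::finite) stream set set)"
  unfolding cyl_sets_def
proof (rule sigma_sets_eqI)
  fix a :: "'a stream set" assume "a \<in> range cyl"
  then obtain x where "a = cyl x" by auto
  then show "a \<in> sigma_sets UNIV Gens"
    unfolding Gens_def by (auto simp: cyl_as_vimage)
next
  fix b :: "'a stream set" assume "b \<in> Gens"
  then obtain m S where "b = stake m -` S" unfolding Gens_def by auto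
  then show "b \<in> sigma_sets UNIV (range cyl)"
    using stake_vimage_in[of m S] unfolding cyl_sets_def by simp
qed

lemma stake_vimage_lift:
  assumes "m \<le> k"
  shows "stake m -` S = stake k -` {x. take m x \<in> S}"
  using assms by (auto simp: take_stake min_def)

lemma Int_stable_Gens: "Int_stable Gens"
  unfolding Int_stable_def Gens_def
proof (clarsimp)
  fix m S n T
  have "stake m -` S \<inter> stake n -` T = stake (max m n) -` {x. take m x \<in> S \<and> take n x \<in> T}"
    by (auto simp: take_stake min_def)
  then show "\<exists>k U. stake m -` S \<inter> stake n -` T = stake k -` U" by blast
qed

lemma UNIV_in_cyl_sets[simp]: "UNIV \<in> cyl_sets"
  unfolding cyl_sets_def by (rule sigma_sets_top)

lemma cyl_stake: "\<omega> \<in> cyl (stake n \<omega>)"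
  unfolding cyl_def by simp

lemma cyl_prefix: "stake (length x) \<omega> = x \<longleftrightarrow> \<omega> \<in> cyl x"
  unfolding cyl_def by simp

lemma space_cyl: assumes "sets M = cyl_sets" shows "space M = UNIV"
proof -
  have "UNIV \<in> sets M" using assms by simp
  then show ?thesis using sets.sets_into_space[of UNIV M] by auto
qed

lemma maximal_ineq:
  fixes \<mu> \<alpha> :: "('a::finite) stream measure" and W :: "'a list set" and c :: ennreal
  assumes sm: "sets \<mu> = cyl_sets" and sa: "sets \<alpha> = cyl_sets"
    and le: "\<And>x. x \<in> W \<Longrightarrow> c * emeasure \<mu> (cyl x) \<le> emeasure \<alpha> (cyl x)"
  shows "c * emeasure \<mu> (\<Union>x\<in>W. cyl x) \<le> emeasure \<alpha> UNIV"
proof -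
  define W' where "W' = {x\<in>W. \<forall>k<length x. take k x \<notin> W}"
  have W'W: "W' \<subseteq> W" unfolding W'_def by auto
  have eqU: "(\<Union>x\<in>W. cyl x) = (\<Union>x\<in>W'. cyl x)"
  proof
    show "(\<Union>x\<in>W'. cyl x) \<subseteq> (\<Union>x\<in>W. cyl x)" using W'W by auto
  next
    show "(\<Union>x\<in>W. cyl x) \<subseteq> (\<Union>x\<in>W'. cyl x)"
    proof
      fix \<omega> assume "\<omega> \<in> (\<Union>x\<in>W. cyl x)"
      then obtain x where x: "x \<in> W" "\<omega> \<in> cyl x" by auto
      then have P: "stake (length x) \<omega> \<in> W" by (simp add: cyl_def)
      define k0 where "k0 = (LEAST k. stake k \<omega> \<in> W)"
      have k0: "stake k0 \<omega> \<in> W" unfolding k0_def by (rule LeastI[of _ "length x"]) (rule P)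
      have "\<forall>k<k0. stake k \<omega> \<notin> W" unfolding k0_def using not_less_Least by blast
      then have "stake k0 \<omega> \<in> W'" using k0 unfolding W'_def by (auto simp: take_stake min_def)
      moreover have "\<omega> \<in> cyl (stake k0 \<omega>)" by (rule cyl_stake)
      ultimately show "\<omega> \<in> (\<Union>x\<in>W'. cyl x)" by auto
    qed
  qed
  have disj: "disjoint_family_on cyl W'"
  unfolding disjoint_family_on_def
  proof (intro ballI impI)
    fix x y assume xy: "x \<in> W'" "y \<in> W'" "x \<noteq> y"
    show "cyl x \<inter> cyl y = {}"
    proof (rule ccontr)
      assume "cyl x \<inter> cyl y \<noteq> {}"
      then obtain \<omega> where w: "stake (length x) \<omega> = x" "stake (length y) \<omega> = y"
        by (auto simp: cyl_def)
      consider "length x < length y" | "length y < length x" | "length x = length y" by linarith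
      then show False
      proof cases
        case 1
        then have "take (length x) y = x" using w by (metis take_stake min_def less_imp_le)
        then show False using xy 1 unfolding W'_def by force
      next
        case 2
        then have "take (length y) x = y" using w by (metis take_stake min_def less_imp_le)
        then show False using xy 2 unfolding W'_def by force
      next
        case 3 then show False using w xy by metis
      qed
    qed
  qed
  have cntb: "countable W'" by simp
  have "c * emeasure \<mu> (\<Union>x\<in>W. cyl x) = c * emeasure \<mu> (\<Union>x\<in>W'. cyl x)" by (simp add: eqU)
  also have "\<dots> = c * (\<integral>\<^sup>+x. emeasure \<mu> (cyl x) \<partial>count_space W')"
    using sm disj by (subst emeasure_UN_countable) auto
  also have "\<dots> = (\<integral>\<^sup>+x. c * emeasure \<mu> (cyl x) \<partial>count_space W')"
    by (simp add: nn_integral_cmult)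
  also have "\<dots> \<le> (\<integral>\<^sup>+x. emeasure \<alpha> (cyl x) \<partial>count_space W')"
    by (rule nn_integral_mono) (use le W'W in auto)
  also have "\<dots> = emeasure \<alpha> (\<Union>x\<in>W'. cyl x)"
    using sa disj by (subst emeasure_UN_countable) auto
  also have "\<dots> \<le> emeasure \<alpha> UNIV"
    by (rule emeasure_mono) (auto simp: sa)
  finally show ?thesis .
qed

definition sd :: "'a set \<Rightarrow> 'a set \<Rightarrow> 'a set" where
  "sd A B = (A - B) \<union> (B - A)"

lemma sd_in[simp]: "A \<in> sets M \<Longrightarrow> B \<in> sets M \<Longrightarrow> sd A B \<in> sets M"
  unfolding sd_def by auto

lemma set_approx:
  fixes M :: "('a::finite) stream measure"
  assumes sM: "sets M = cyl_sets" and fin: "finite_measure M" and A: "A \<in> cyl_sets"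
  shows "\<forall>e>0. \<exists>m S. measure M (sd A (stake m -` S)) < e"
proof -
  interpret finite_measure M by (rule fin)
  have Gsub: "Gens \<subseteq> Pow (UNIV :: 'a stream set)" by auto
  from A have A': "A \<in> sigma_sets UNIV Gens" by (simp add: cyl_sets_Gens)
  show ?thesis using Int_stable_Gens Gsub A'
  proof (induction rule: sigma_sets_induct_disjoint)
    case (basic A)
    then obtain m S where "A = stake m -` S" unfolding Gens_def by auto
    then show ?case by (auto intro!: exI[of _ m] exI[of _ S] simp: sd_def)
  next
    case empty
    then show ?case by (auto intro!: exI[of _ 0] exI[of _ "{}"] simp: sd_def)
  next
    case (compl A)
    show ?case
    proof (intro allI impI)
      fix e :: real assume e: "e > 0"
      then obtain m S where mS: "measure M (sd A (stake m -` S)) < e" using compl by blast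
      have "sd (UNIV - A) (stake m -` (- S)) = sd A (stake m -` S)"
        unfolding sd_def by auto
      then show "\<exists>m S. measure M (sd (UNIV - A) (stake m -` S)) < e" using mS by metis
    qed
  next
    case (union A)
    have Ain: "\<And>i. A i \<in> sets M" using union(2) by (auto simp: sM cyl_sets_Gens)
    show ?case
    proof (intro allI impI)
      fix e :: real assume e: "e > 0"
      define B where "B n = (\<Union>i<n. A i)" for n
      have stin: "\<And>m S. stake m -` S \<in> sets M" using sM by simp
      have Bin: "\<And>n. B n \<in> sets M" unfolding B_def using Ain by auto
      have incB: "incseq B" unfolding B_def incseq_def by (auto intro: order_less_le_trans)
      have UB: "(\<Union>n. B n) = (\<Union>i. A i)" unfolding B_def by auto
      have "(\<lambda>n. measure M (B n)) \<longlonglongrightarrow> measure M (\<Union>i. A i)"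
        using finite_Lim_measure_incseq[of B] Bin incB UB by auto
      then obtain N where N: "\<And>n. n \<ge> N \<Longrightarrow> dist (measure M (B n)) (measure M (\<Union>i. A i)) < e/2"
        using e by (metis LIMSEQ_def half_gt_zero)
      have UAin: "(\<Union>i. A i) \<in> sets M" using Ain by auto
      have BsubU: "B N \<subseteq> (\<Union>i. A i)" unfolding B_def by auto
      have tail: "measure M ((\<Union>i. A i) - B N) < e/2"
      proof -
        have "measure M ((\<Union>i. A i) - B N) = measure M (\<Union>i. A i) - measure M (B N)"
          using finite_measure_Diff[OF UAin Bin[of N]] BsubU by simp
        also have "\<dots> < e/2" using N[of N] by (simp add: dist_real_def abs_if split: if_splits)
        finally show ?thesis .
      qed
      define e' where "e' = e / (2 * (real N + 1))"
      have e': "e' > 0" unfolding e'_def using e by simp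
      have "\<forall>i. \<exists>p. measure M (sd (A i) (stake (fst p) -` snd p)) < e'"
        using union(3) e' by fastforce
      then obtain p where p: "\<And>i. measure M (sd (A i) (stake (fst (p i)) -` snd (p i))) < e'"
        by metis
      define k where "k = Max (insert 0 ((\<lambda>i. fst (p i)) ` {..<N}))"
      have kge: "\<And>i. i < N \<Longrightarrow> fst (p i) \<le> k" unfolding k_def by (auto intro: Max_ge)
      define S where "S = {x. \<exists>i<N. take (fst (p i)) x \<in> snd (p i)}"
      have SU: "stake k -` S = (\<Union>i<N. stake (fst (p i)) -` snd (p i))"
        unfolding S_def using kge by (auto simp: take_stake min_def)
      have sub: "sd (\<Union>i. A i) (stake k -` S) \<subseteq>
          ((\<Union>i. A i) - B N) \<union> (\<Union>i<N. sd (A i) (stake (fst (p i)) -` snd (p i)))"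
        unfolding SU sd_def B_def by blast
      have "measure M (sd (\<Union>i. A i) (stake k -` S)) \<le>
          measure M (((\<Union>i. A i) - B N) \<union> (\<Union>i<N. sd (A i) (stake (fst (p i)) -` snd (p i))))"
        by (rule finite_measure_mono[OF sub]) (use Ain Bin stin in \<open>auto intro!: sets.Un sets.Diff sets.finite_UN sets.countable_UN sd_in\<close>)
      also have "\<dots> \<le> measure M ((\<Union>i. A i) - B N) +
          measure M (\<Union>i<N. sd (A i) (stake (fst (p i)) -` snd (p i)))"
        by (rule measure_subadditive) (use Ain Bin stin in \<open>auto intro!: sets.Un sets.Diff sets.finite_UN sets.countable_UN sd_in\<close>)
      also have "measure M (\<Union>i<N. sd (A i) (stake (fst (p i)) -` snd (p i))) \<le>
          (\<Sum>i<N. measure M (sd (A i) (stake (fst (p i)) -` snd (p i))))"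
        by (rule finite_measure_subadditive_finite) (use Ain stin in \<open>auto intro!: sd_in\<close>)
      also have "\<dots> \<le> (\<Sum>i<N. e')" by (rule sum_mono) (use p in \<open>auto intro: less_imp_le\<close>)
      also have "\<dots> = real N * e'" by simp
      also have "real N * e' \<le> e / 2"
        unfolding e'_def using e by (simp add: field_simps)
      finally have "measure M (sd (\<Union>i. A i) (stake k -` S)) < e" using tail by linarith
      then show "\<exists>m S. measure M (sd (\<Union>i. A i) (stake m -` S)) < e" by blast
    qed
  qed
qed

lemma stake_measurable:
  assumes sM: "sets M = cyl_sets"
  shows "stake m \<in> measurable M (count_space (UNIV :: ('a::finite) list set))"
  unfolding measurable_count_space_eq2_countable using sM by (auto simp: space_cyl)

lemma cf_measurable[measurable]:
  assumes sM: "sets M = cyl_sets"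
  shows "(\<lambda>\<omega>. g (stake m \<omega>) :: real) \<in> borel_measurable (M :: ('a::finite) stream measure)"
  using measurable_compose[OF stake_measurable[OF sM, of m], of g borel] by simp

lemma cf_integrable:
  assumes sM: "sets M = cyl_sets" and fin: "finite_measure M"
  shows "integrable (M :: ('a::finite) stream measure) (\<lambda>\<omega>. g (stake m \<omega>) :: real)"
proof -
  interpret finite_measure M by (rule fin)
  define B where "B = Max ((\<lambda>x. \<bar>g x\<bar>) ` {x. length x = m})"
  have "\<And>\<omega>. \<bar>g (stake m \<omega>)\<bar> \<le> B"
    unfolding B_def by (rule Max_ge) (auto intro: finite_len_lists)
  then show ?thesis
    by (intro integrable_const_bound[where B=B] cf_measurable[OF sM]) auto
qed

lemma fun_approx:
  fixes M :: "('a::finite) stream measure" and f :: "'a stream \<Rightarrow> real"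
  assumes sM: "sets M = cyl_sets" and fin: "finite_measure M" and f: "integrable M f"
  shows "\<forall>e>0. \<exists>m g. (\<integral>\<omega>. \<bar>f \<omega> - g (stake m \<omega>)\<bar> \<partial>M) < e"
  using f
proof (induction rule: integrable_induct)
  case (base A c)
  interpret finite_measure M by (rule fin)
  show ?case
  proof (intro allI impI)
    fix e :: real assume e: "e > 0"
    have Ac: "A \<in> cyl_sets" using base sM by simp
    have "e / (\<bar>c\<bar> + 1) > 0" using e by simp
    then obtain m S where mS: "measure M (sd A (stake m -` S)) < e / (\<bar>c\<bar> + 1)"
      using set_approx[OF sM fin Ac] by blast
    define g where "g x = (if x \<in> S then c else 0)" for x
    have eq: "\<And>\<omega>. \<bar>indicator A \<omega> *\<^sub>R c - g (stake m \<omega>)\<bar> = \<bar>c\<bar> * indicator (sd A (stake m -` S)) \<omega>"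
      unfolding g_def sd_def by (auto simp: indicator_def)
    have sdin: "sd A (stake m -` S) \<in> sets M" by (rule sd_in) (use base sM in auto)
    have "(\<integral>\<omega>. \<bar>indicator A \<omega> *\<^sub>R c - g (stake m \<omega>)\<bar> \<partial>M) = \<bar>c\<bar> * measure M (sd A (stake m -` S))"
      unfolding eq using sdin by simp
    also have "\<dots> \<le> (\<bar>c\<bar> + 1) * measure M (sd A (stake m -` S))"
      by (intro mult_right_mono) auto
    also have "\<dots> < (\<bar>c\<bar> + 1) * (e / (\<bar>c\<bar> + 1))"
      by (intro mult_strict_left_mono mS) (simp add: add_nonneg_pos)
    also have "\<dots> = e" by (simp add: add_nonneg_pos)
    finally show "\<exists>m g. (\<integral>\<omega>. \<bar>indicator A \<omega> *\<^sub>R c - g (stake m \<omega>)\<bar> \<partial>M) < e" by blast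
  qed
next
  case (add f h)
  show ?case
  proof (intro allI impI)
    fix e :: real assume e: "e > 0"
    then have e2: "e/2 > 0" by simp
    obtain m1 g1 where 1: "(\<integral>\<omega>. \<bar>f \<omega> - g1 (stake m1 \<omega>)\<bar> \<partial>M) < e/2" using add e2 by blast
    obtain m2 g2 where 2: "(\<integral>\<omega>. \<bar>h \<omega> - g2 (stake m2 \<omega>)\<bar> \<partial>M) < e/2" using add e2 by blast
    define k where "k = max m1 m2"
    define g where "g x = g1 (take m1 x) + g2 (take m2 x)" for x
    have geq: "\<And>\<omega>. g (stake k \<omega>) = g1 (stake m1 \<omega>) + g2 (stake m2 \<omega>)"
      unfolding g_def k_def by (simp add: take_stake min_def)
    have i1: "integrable M (\<lambda>\<omega>. \<bar>f \<omega> - g1 (stake m1 \<omega>)\<bar>)"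
      using add cf_integrable[OF sM fin] by auto
    have i2: "integrable M (\<lambda>\<omega>. \<bar>h \<omega> - g2 (stake m2 \<omega>)\<bar>)"
      using add cf_integrable[OF sM fin] by auto
    have i3: "integrable M (\<lambda>\<omega>. \<bar>f \<omega> + h \<omega> - g (stake k \<omega>)\<bar>)"
      using add cf_integrable[OF sM fin] by auto
    have "(\<integral>\<omega>. \<bar>f \<omega> + h \<omega> - g (stake k \<omega>)\<bar> \<partial>M) \<le>
        (\<integral>\<omega>. \<bar>f \<omega> - g1 (stake m1 \<omega>)\<bar> + \<bar>h \<omega> - g2 (stake m2 \<omega>)\<bar> \<partial>M)"
      by (rule Bochner_Integration.integral_mono[OF i3]) (use i1 i2 geq in auto)
    also have "\<dots> = (\<integral>\<omega>. \<bar>f \<omega> - g1 (stake m1 \<omega>)\<bar> \<partial>M) + (\<integral>\<omega>. \<bar>h \<omega> - g2 (stake m2 \<omega>)\<bar> \<partial>M)"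
      by (rule Bochner_Integration.integral_add[OF i1 i2])
    also have "\<dots> < e" using 1 2 by simp
    finally show "\<exists>m g. (\<integral>\<omega>. \<bar>f \<omega> + h \<omega> - g (stake m \<omega>)\<bar> \<partial>M) < e" by blast
  qed
next
  case (lim f s)
  have fint: "integrable M f" using lim by blast
  have sint: "\<And>i. integrable M (s i)" using lim by blast
  have fm: "f \<in> borel_measurable M" using fint by auto
  have bnd: "\<And>i x. x \<in> space M \<Longrightarrow> norm (s i x) \<le> 2 * norm (f x)" by fact
  have lims: "\<And>x. x \<in> space M \<Longrightarrow> (\<lambda>i. s i x) \<longlonglongrightarrow> f x" by fact
  have sm: "\<And>i. s i \<in> borel_measurable M" using sint by auto
  have conv: "(\<lambda>i. \<integral>\<omega>. \<bar>s i \<omega> - f \<omega>\<bar> \<partial>M) \<longlonglongrightarrow> (\<integral>\<omega>. \<bar>f \<omega> - f \<omega>\<bar> \<partial>M)"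
  proof (rule integral_dominated_convergence[where w="\<lambda>\<omega>. 3 * \<bar>f \<omega>\<bar>"])
    show "integrable M (\<lambda>\<omega>. 3 * \<bar>f \<omega>\<bar>)" using fint by auto
    show "AE \<omega> in M. (\<lambda>i. \<bar>s i \<omega> - f \<omega>\<bar>) \<longlonglongrightarrow> \<bar>f \<omega> - f \<omega>\<bar>"
      using lims by (intro AE_I2) (auto intro!: tendsto_eq_intros)
    show "\<And>i. AE \<omega> in M. norm \<bar>s i \<omega> - f \<omega>\<bar> \<le> 3 * \<bar>f \<omega>\<bar>"
      proof (intro AE_I2)
      fix i \<omega> assume "\<omega> \<in> space M"
      then have "\<bar>s i \<omega>\<bar> \<le> 2 * \<bar>f \<omega>\<bar>" using bnd by simp
      then show "norm \<bar>s i \<omega> - f \<omega>\<bar> \<le> 3 * \<bar>f \<omega>\<bar>" by simp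
    qed
  qed (use fm sm in auto)
  show ?case
  proof (intro allI impI)
    fix e :: real assume e: "e > 0"
    then have e2: "e/2 > 0" by simp
    from conv have "(\<lambda>i. \<integral>\<omega>. \<bar>s i \<omega> - f \<omega>\<bar> \<partial>M) \<longlonglongrightarrow> 0" by simp
    then obtain N where N: "\<forall>n\<ge>N. norm ((\<integral>\<omega>. \<bar>s n \<omega> - f \<omega>\<bar> \<partial>M) - 0) < e/2"
      using e2 LIMSEQ_D by blast
    define i where "i = N"
    have i: "(\<integral>\<omega>. \<bar>s i \<omega> - f \<omega>\<bar> \<partial>M) < e/2"
      using N[rule_format, of N] unfolding i_def by simp
    obtain m g where g: "(\<integral>\<omega>. \<bar>s i \<omega> - g (stake m \<omega>)\<bar> \<partial>M) < e/2" using lim e2 by blast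
    have i1: "integrable M (\<lambda>\<omega>. \<bar>s i \<omega> - f \<omega>\<bar>)" using sint fint by auto
    have i2: "integrable M (\<lambda>\<omega>. \<bar>s i \<omega> - g (stake m \<omega>)\<bar>)"
      using sint cf_integrable[OF sM fin] by auto
    have i3: "integrable M (\<lambda>\<omega>. \<bar>f \<omega> - g (stake m \<omega>)\<bar>)"
      using fint cf_integrable[OF sM fin] by auto
    have "(\<integral>\<omega>. \<bar>f \<omega> - g (stake m \<omega>)\<bar> \<partial>M) \<le>
        (\<integral>\<omega>. \<bar>s i \<omega> - f \<omega>\<bar> + \<bar>s i \<omega> - g (stake m \<omega>)\<bar> \<partial>M)"
      by (rule Bochner_Integration.integral_mono[OF i3]) (use i1 i2 in auto)
    also have "\<dots> = (\<integral>\<omega>. \<bar>s i \<omega> - f \<omega>\<bar> \<partial>M) + (\<integral>\<omega>. \<bar>s i \<omega> - g (stake m \<omega>)\<bar> \<partial>M)"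
      by (rule Bochner_Integration.integral_add[OF i1 i2])
    also have "\<dots> < e" using i g by simp
    finally show "\<exists>m g. (\<integral>\<omega>. \<bar>f \<omega> - g (stake m \<omega>)\<bar> \<partial>M) < e" by blast
  qed
qed

lemma ennreal_suminf_swap:
  fixes g :: "nat \<Rightarrow> nat \<Rightarrow> ennreal"
  shows "(\<Sum>i. \<Sum>k. g i k) = (\<Sum>k. \<Sum>i. g i k)"
proof -
  have "(\<Sum>i. \<Sum>k. g i k) = (\<Sum>i. \<integral>\<^sup>+k. g i k \<partial>count_space UNIV)"
    by (simp add: nn_integral_count_space_nat)
  also have "\<dots> = (\<integral>\<^sup>+k. (\<Sum>i. g i k) \<partial>count_space UNIV)"
    by (rule nn_integral_suminf[symmetric]) auto
  also have "\<dots> = (\<Sum>k. \<Sum>i. g i k)"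
    by (simp add: nn_integral_count_space_nat)
  finally show ?thesis .
qed

lemma mixture_props:
  fixes \<mu>s :: "nat \<Rightarrow> ('a::finite) stream measure"
  assumes sm: "\<And>k. sets (\<mu>s k) = cyl_sets"
  shows "sets (mixture w \<mu>s) = cyl_sets"
    and "A \<in> cyl_sets \<Longrightarrow> emeasure (mixture w \<mu>s) A = (\<Sum>k. ennreal (w k) * emeasure (\<mu>s k) A)"
proof -
  let ?m = "\<lambda>A. \<Sum>k. ennreal (w k) * emeasure (\<mu>s k) A"
  have pos: "positive cyl_sets ?m" unfolding positive_def by simp
  have ca: "countably_additive cyl_sets ?m"
    unfolding countably_additive_def
  proof (intro allI impI)
    fix A :: "nat \<Rightarrow> 'a stream set"
    assume A: "range A \<subseteq> cyl_sets" "disjoint_family A" "\<Union> (range A) \<in> cyl_sets"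
    have "\<And>k. emeasure (\<mu>s k) (\<Union> (range A)) = (\<Sum>i. emeasure (\<mu>s k) (A i))"
      using A sm by (intro suminf_emeasure[symmetric]) auto
    then have "?m (\<Union> (range A)) = (\<Sum>k. \<Sum>i. ennreal (w k) * emeasure (\<mu>s k) (A i))"
      by simp
    also have "\<dots> = (\<Sum>i. \<Sum>k. ennreal (w k) * emeasure (\<mu>s k) (A i))"
      by (rule ennreal_suminf_swap[symmetric])
    finally show "(\<Sum>i. ?m (A i)) = ?m (\<Union> (range A))" by simp
  qed
  show "sets (mixture w \<mu>s) = cyl_sets"
    unfolding mixture_def using sigma_algebra_cyl_sets
    by (simp add: sigma_algebra.sigma_sets_eq[OF sigma_algebra_cyl_sets])
  show "A \<in> cyl_sets \<Longrightarrow> emeasure (mixture w \<mu>s) A = ?m A"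
    unfolding mixture_def by (rule emeasure_measure_of_sigma[OF sigma_algebra_cyl_sets pos ca])
qed

lemma mixture_prob:
  fixes \<mu>s :: "nat \<Rightarrow> ('a::finite) stream measure"
  assumes sp: "\<And>k. seq_prob (\<mu>s k)" and w: "\<And>k. w k \<ge> 0" "w sums 1"
  shows "seq_prob (mixture w \<mu>s)"
proof -
  have sm: "\<And>k. sets (\<mu>s k) = cyl_sets" and pk: "\<And>k. prob_space (\<mu>s k)"
    and spk: "\<And>k. space (\<mu>s k) = UNIV"
    using sp unfolding seq_prob_def by auto
  have s: "sets (mixture w \<mu>s) = cyl_sets" by (rule mixture_props(1)[OF sm])
  have sp': "space (mixture w \<mu>s) = UNIV" by (rule space_cyl[OF s])
  have "emeasure (mixture w \<mu>s) UNIV = (\<Sum>k. ennreal (w k) * emeasure (\<mu>s k) UNIV)"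
    by (rule mixture_props(2)[OF sm]) simp
  also have "\<dots> = (\<Sum>k. ennreal (w k))"
    using prob_space.emeasure_space_1[OF pk] spk by simp
  also have "\<dots> = ennreal (\<Sum>k. w k)"
    using w by (intro suminf_ennreal2) (auto simp: sums_iff)
  also have "\<dots> = 1" using w by (simp add: sums_iff)
  finally have "prob_space (mixture w \<mu>s)" using sp' by (intro prob_spaceI) simp
  then show ?thesis unfolding seq_prob_def using s sp' by simp
qed

lemma mixture_null:
  fixes \<mu>s :: "nat \<Rightarrow> ('a::finite) stream measure"
  assumes sm: "\<And>k. sets (\<mu>s k) = cyl_sets" and w: "\<And>k. w k > 0" and A: "A \<in> cyl_sets"
  shows "emeasure (mixture w \<mu>s) A = 0 \<longleftrightarrow> (\<forall>k. emeasure (\<mu>s k) A = 0)"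
proof -
  have "emeasure (mixture w \<mu>s) A = (\<Sum>k. ennreal (w k) * emeasure (\<mu>s k) A)"
    by (rule mixture_props(2)[OF sm A])
  moreover have "(\<Sum>k. ennreal (w k) * emeasure (\<mu>s k) A) = 0 \<longleftrightarrow> (\<forall>k. ennreal (w k) * emeasure (\<mu>s k) A = 0)"
    by (rule suminf_eq_zero_iff) (auto intro: summableI)
  moreover have "\<And>k. ennreal (w k) * emeasure (\<mu>s k) A = 0 \<longleftrightarrow> emeasure (\<mu>s k) A = 0"
  proof -
    fix k have "w k \<noteq> 0" using w[of k] by simp
    then show "ennreal (w k) * emeasure (\<mu>s k) A = 0 \<longleftrightarrow> emeasure (\<mu>s k) A = 0"
      using w[of k] by simp
  qed
  ultimately show ?thesis by simp
qed

lemma le_of_approx: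
  fixes x y :: real
  assumes "\<And>j::nat. y - 1 / real (Suc j) \<le> x"
  shows "y \<le> x"
proof (rule ccontr)
  assume "\<not> y \<le> x"
  then have "0 < y - x" by simp
  then obtain j where "inverse (real (Suc j)) < y - x" using reals_Archimedean by blast
  then show False using assms[of j] by (simp add: inverse_eq_divide)
qed

lemma cyl_sets_Un: "X \<in> cyl_sets \<Longrightarrow> Y \<in> cyl_sets \<Longrightarrow> X \<union> Y \<in> cyl_sets"
  unfolding cyl_sets_def by (rule sigma_sets_Un)

lemma cyl_sets_Diff: "X \<in> cyl_sets \<Longrightarrow> Y \<in> cyl_sets \<Longrightarrow> X - Y \<in> cyl_sets"
proof -
  interpret sigma_algebra UNIV cyl_sets by (rule sigma_algebra_cyl_sets)
  show "X \<in> cyl_sets \<Longrightarrow> Y \<in> cyl_sets \<Longrightarrow> X - Y \<in> cyl_sets" by auto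
qed

lemma halmos_savage:
  fixes C :: "('a::finite) stream measure set" and \<rho> :: "'a stream measure"
  assumes Cne: "C \<noteq> {}" and Cp: "\<forall>\<mu>\<in>C. seq_prob \<mu>" and rp: "seq_prob \<rho>"
    and ac: "\<forall>\<mu>\<in>C. \<forall>A\<in>cyl_sets. emeasure \<rho> A = 0 \<longrightarrow> emeasure \<mu> A = 0"
  shows "\<exists>\<mu>s :: nat \<Rightarrow> _. (\<forall>k. \<mu>s k \<in> C) \<and>
     (\<forall>\<mu>\<in>C. \<forall>A\<in>cyl_sets. (\<forall>k. emeasure (\<mu>s k) A = 0) \<longrightarrow> emeasure \<mu> A = 0)"
proof -
  interpret r: prob_space \<rho> using rp unfolding seq_prob_def by auto
  have sr: "sets \<rho> = cyl_sets" using rp unfolding seq_prob_def by auto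
  have sC: "\<And>\<mu>. \<mu> \<in> C \<Longrightarrow> sets \<mu> = cyl_sets" using Cp unfolding seq_prob_def by auto
  define nf where "nf \<mu>s N \<longleftrightarrow> N \<in> cyl_sets \<and> (\<forall>k. emeasure (\<mu>s k) N = 0)"
    for \<mu>s :: "nat \<Rightarrow> 'a stream measure" and N
  define t where "t \<mu>s = Sup (measure \<rho> ` {N. nf \<mu>s N})" for \<mu>s
  have nf_empty: "\<And>\<mu>s. nf \<mu>s {}" unfolding nf_def by (simp add: cyl_sets_def sigma_sets.Empty)
  have ne: "\<And>\<mu>s. measure \<rho> ` {N. nf \<mu>s N} \<noteq> {}" using nf_empty by blast
  have bdd: "\<And>\<mu>s. bdd_above (measure \<rho> ` {N. nf \<mu>s N})"
    by (intro bdd_aboveI[of _ 1]) (auto simp: r.prob_le_1)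
  have upper: "\<And>\<mu>s N. nf \<mu>s N \<Longrightarrow> measure \<rho> N \<le> t \<mu>s"
    unfolding t_def using bdd by (intro cSup_upper) auto
  have t0: "\<And>\<mu>s. 0 \<le> t \<mu>s"
  proof -
    fix \<mu>s
    from nf_empty show "0 \<le> t \<mu>s" using upper[of \<mu>s "{}"] by simp
  qed
  have attain: "\<exists>N. nf \<mu>s N \<and> measure \<rho> N = t \<mu>s" if sm: "\<And>k. sets (\<mu>s k) = cyl_sets" for \<mu>s
  proof -
    have "\<forall>j::nat. \<exists>N. nf \<mu>s N \<and> t \<mu>s - 1 / real (Suc j) < measure \<rho> N"
    proof
      fix j :: nat
      have "t \<mu>s - 1 / real (Suc j) < t \<mu>s" by simp
      then show "\<exists>N. nf \<mu>s N \<and> t \<mu>s - 1 / real (Suc j) < measure \<rho> N"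
        unfolding t_def using less_cSup_iff[OF ne bdd] by blast
    qed
    then obtain N where N: "\<And>j. nf \<mu>s (N j)" "\<And>j. t \<mu>s - 1 / real (Suc j) < measure \<rho> (N j)"
      by metis
    define N0 where "N0 = (\<Union>j. N j)"
    have Nin: "\<And>j. N j \<in> cyl_sets" using N(1) unfolding nf_def by auto
    have N0in: "N0 \<in> cyl_sets" unfolding N0_def using Nin
      by (simp add: cyl_sets_def sigma_sets.Union)
    have "nf \<mu>s N0"
      unfolding nf_def N0_def
    proof (intro conjI allI)
      show "(\<Union>j. N j) \<in> cyl_sets" using N0in N0_def by simp
      fix k show "emeasure (\<mu>s k) (\<Union>j. N j) = 0"
        using N(1) Nin sm[of k] unfolding nf_def by (intro emeasure_UN_eq_0) auto
    qed
    moreover have "t \<mu>s \<le> measure \<rho> N0"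
    proof (rule le_of_approx)
      fix j
      have "measure \<rho> (N j) \<le> measure \<rho> N0"
        unfolding N0_def using Nin N0in N0_def sr by (intro r.finite_measure_mono) auto
      then show "t \<mu>s - 1 / real (Suc j) \<le> measure \<rho> N0" using N(2)[of j] by linarith
    qed
    ultimately show ?thesis using upper[of \<mu>s N0] by force
  qed
  define T where "T = {\<mu>s :: nat \<Rightarrow> _. \<forall>k. \<mu>s k \<in> C}"
  have Tne: "T \<noteq> {}" using Cne unfolding T_def by auto
  have Tsets: "\<And>\<mu>s k. \<mu>s \<in> T \<Longrightarrow> sets (\<mu>s k) = cyl_sets" unfolding T_def using sC by auto
  define \<tau> where "\<tau> = Inf (t ` T)"
  have bddb: "bdd_below (t ` T)" by (intro bdd_belowI[of _ 0]) (auto simp: t0)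
  have tau_le: "\<And>\<mu>s. \<mu>s \<in> T \<Longrightarrow> \<tau> \<le> t \<mu>s" unfolding \<tau>_def using bddb by (intro cInf_lower) auto
  have "\<forall>j::nat. \<exists>\<mu>s\<in>T. t \<mu>s < \<tau> + 1 / real (Suc j)"
  proof
    fix j :: nat
    have "Inf (t ` T) < \<tau> + 1 / real (Suc j)" unfolding \<tau>_def by simp
    then show "\<exists>\<mu>s\<in>T. t \<mu>s < \<tau> + 1 / real (Suc j)"
      using cInf_less_iff[of "t ` T"] Tne bddb by auto
  qed
  then obtain M where M: "\<And>j. M j \<in> T" "\<And>j. t (M j) < \<tau> + 1 / real (Suc j)" by metis
  define comb where "comb k = (case prod_decode k of (j, i) \<Rightarrow> M j i)" for k
  have combT: "comb \<in> T" unfolding T_def comb_def using M(1) unfolding T_def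
    by (auto split: prod.splits)
  have comb_nf: "nf (M j) N" if "nf comb N" for j N
    using that unfolding nf_def
  proof (intro conjI allI)
    fix i
    have "comb (prod_encode (j, i)) = M j i" unfolding comb_def by simp
    then show "emeasure (M j i) N = 0" using that unfolding nf_def by metis
  qed (simp add: nf_def)
  have "t comb \<le> \<tau>"
  proof (rule ccontr)
    assume "\<not> t comb \<le> \<tau>"
    then have "0 < t comb - \<tau>" by simp
    then obtain j where j: "inverse (real (Suc j)) < t comb - \<tau>" using reals_Archimedean by blast
    have "t comb \<le> t (M j)"
      unfolding t_def using comb_nf by (intro cSup_subset_mono[OF ne bdd]) auto
    then show False using M(2)[of j] j by (simp add: inverse_eq_divide)
  qed
  then have tcomb: "t comb = \<tau>" using tau_le[OF combT] by simp
  obtain N0 where N0: "nf comb N0" "measure \<rho> N0 = \<tau>" using attain[of comb] Tsets[OF combT] tcomb by metis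
  have part1: "\<forall>k. comb k \<in> C" using combT unfolding T_def by auto
  have part2: "\<forall>\<mu>\<in>C. \<forall>A\<in>cyl_sets. (\<forall>k. emeasure (comb k) A = 0) \<longrightarrow> emeasure \<mu> A = 0"
  proof (intro ballI impI)
    fix \<mu> A assume \<mu>: "\<mu> \<in> C" and A: "A \<in> cyl_sets" and Anull: "\<forall>k. emeasure (comb k) A = 0"
    interpret m: prob_space \<mu> using Cp \<mu> unfolding seq_prob_def by auto
    have sm: "sets \<mu> = cyl_sets" using sC \<mu> by simp
    define comb' where "comb' k = (case k of 0 \<Rightarrow> \<mu> | Suc k \<Rightarrow> comb k)" for k
    have comb'T: "comb' \<in> T" using combT \<mu> unfolding T_def comb'_def by (auto split: nat.splits)
    obtain N1 where N1: "nf comb' N1" "measure \<rho> N1 = t comb'" using attain[of comb'] Tsets[OF comb'T] by metis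
    have N1ge: "\<tau> \<le> measure \<rho> N1" using N1(2) tau_le[OF comb'T] by simp
    have N1c: "nf comb N1" using N1(1) unfolding nf_def comb'_def by (metis nat.simps(5))
    have N1m: "emeasure \<mu> N1 = 0" using N1(1) unfolding nf_def comb'_def by (metis nat.simps(4))
    have N0in: "N0 \<in> cyl_sets" and N1in: "N1 \<in> cyl_sets" using N0(1) N1(1) unfolding nf_def by auto
    have Un_in: "\<And>X Y. X \<in> cyl_sets \<Longrightarrow> Y \<in> cyl_sets \<Longrightarrow> X \<union> Y \<in> cyl_sets"
      by (rule cyl_sets_Un)
    have Diff_in: "\<And>X Y. X \<in> cyl_sets \<Longrightarrow> Y \<in> cyl_sets \<Longrightarrow> X - Y \<in> cyl_sets"
      by (rule cyl_sets_Diff)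
    have "nf comb (A \<union> N0)" unfolding nf_def
    proof (intro conjI allI)
      show "A \<union> N0 \<in> cyl_sets" using A N0in Un_in by blast
      fix k
      have "emeasure (comb k) (A \<union> N0) \<le> emeasure (comb k) A + emeasure (comb k) N0"
        using A N0in Tsets[OF combT, of k] by (intro emeasure_subadditive) auto
      then show "emeasure (comb k) (A \<union> N0) = 0" using Anull N0(1) unfolding nf_def by simp
    qed
    then have "measure \<rho> (A \<union> N0) \<le> \<tau>" using upper tcomb by metis
    moreover have "measure \<rho> (A \<union> N0) = measure \<rho> (A - N0) + measure \<rho> N0"
    proof -
      have e: "A \<union> N0 = (A - N0) \<union> N0" by auto
      have eqm: "measure \<rho> ((A - N0) \<union> N0) = measure \<rho> (A - N0) + measure \<rho> N0"
        using A N0in sr Diff_in by (intro r.finite_measure_Union) auto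
      show ?thesis by (subst e) (rule eqm)
    qed
    ultimately have "measure \<rho> (A - N0) = 0" using N0(2) measure_nonneg[of \<rho> "A - N0"] by linarith
    then have "emeasure \<rho> (A - N0) = 0" by (simp add: r.emeasure_eq_measure)
    then have p1: "emeasure \<mu> (A - N0) = 0" using ac \<mu> A N0in Diff_in by blast
    have "nf comb (N0 \<union> N1)" unfolding nf_def
    proof (intro conjI allI)
      show "N0 \<union> N1 \<in> cyl_sets" using N1in N0in Un_in by blast
      fix k
      have "emeasure (comb k) (N0 \<union> N1) \<le> emeasure (comb k) N0 + emeasure (comb k) N1"
        using N1in N0in Tsets[OF combT, of k] by (intro emeasure_subadditive) auto
      then show "emeasure (comb k) (N0 \<union> N1) = 0" using N1c N0(1) unfolding nf_def by simp
    qed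
    then have "measure \<rho> (N0 \<union> N1) \<le> \<tau>" using upper tcomb by metis
    moreover have "measure \<rho> (N0 \<union> N1) = measure \<rho> (N0 - N1) + measure \<rho> N1"
    proof -
      have e: "N0 \<union> N1 = (N0 - N1) \<union> N1" by auto
      have eqm: "measure \<rho> ((N0 - N1) \<union> N1) = measure \<rho> (N0 - N1) + measure \<rho> N1"
        using N1in N0in sr Diff_in by (intro r.finite_measure_Union) auto
      show ?thesis by (subst e) (rule eqm)
    qed
    ultimately have "measure \<rho> (N0 - N1) = 0" using N1ge measure_nonneg[of \<rho> "N0 - N1"] by linarith
    then have "emeasure \<rho> (N0 - N1) = 0" by (simp add: r.emeasure_eq_measure)
    then have p2: "emeasure \<mu> (N0 - N1) = 0" using ac \<mu> N1in N0in Diff_in by blast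
    have i1: "A - N0 \<in> sets \<mu>" using A N0in sm by (simp add: cyl_sets_Diff)
    have i2: "N0 - N1 \<in> sets \<mu>" using N1in N0in sm by (simp add: cyl_sets_Diff)
    have i3: "N1 \<in> sets \<mu>" using N1in sm by simp
    have i4: "(N0 - N1) \<union> N1 \<in> sets \<mu>" using i2 i3 by (rule sets.Un)
    have i5: "(A - N0) \<union> ((N0 - N1) \<union> N1) \<in> sets \<mu>" using i1 i4 by (rule sets.Un)
    have "emeasure \<mu> A \<le> emeasure \<mu> ((A - N0) \<union> ((N0 - N1) \<union> N1))"
      by (rule emeasure_mono[OF _ i5]) blast
    also have "\<dots> \<le> emeasure \<mu> (A - N0) + emeasure \<mu> ((N0 - N1) \<union> N1)"
      by (rule emeasure_subadditive[OF i1 i4])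
    also have "\<dots> \<le> emeasure \<mu> (A - N0) + (emeasure \<mu> (N0 - N1) + emeasure \<mu> N1)"
      by (rule add_left_mono[OF emeasure_subadditive[OF i2 i3]])
    also have "\<dots> = 0" using p1 p2 N1m by simp
    finally show "emeasure \<mu> A = 0" by simp
  qed
  show ?thesis using part1 part2 by blast
qed

lemma pos_prefixes:
  fixes \<mu> :: "('a::finite) stream measure"
  assumes fin: "finite_measure \<mu>" and sm: "sets \<mu> = cyl_sets"
  shows "AE \<omega> in \<mu>. \<forall>n. 0 < measure \<mu> (cyl (stake n \<omega>))"
proof -
  interpret finite_measure \<mu> by (rule fin)
  have "AE \<omega> in \<mu>. \<forall>x. \<omega> \<in> cyl x \<longrightarrow> 0 < measure \<mu> (cyl x)"
    unfolding AE_all_countable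
  proof
    fix x :: "'a list"
    show "AE \<omega> in \<mu>. \<omega> \<in> cyl x \<longrightarrow> 0 < measure \<mu> (cyl x)"
    proof (cases "0 < measure \<mu> (cyl x)")
      case True then show ?thesis by simp
    next
      case False
      then have "measure \<mu> (cyl x) = 0" using measure_nonneg[of \<mu> "cyl x"] by linarith
      then have nl: "cyl x \<in> null_sets \<mu>" using sm by (simp add: emeasure_eq_measure null_sets_def)
      show ?thesis using AE_not_in[OF nl] by eventually_elim auto
    qed
  qed
  then show ?thesis by (rule AE_mp[OF _ AE_I2]) (auto simp: cyl_stake)
qed

lemma cond_prob_bounds:
  assumes fin: "finite_measure M" and A: "A \<in> sets M" and c: "cyl x \<in> sets M"
  shows "0 \<le> cond_prob M A x" "cond_prob M A x \<le> 1"
proof -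
  interpret finite_measure M by (rule fin)
  have le: "measure M (A \<inter> cyl x) \<le> measure M (cyl x)"
    using A c by (intro finite_measure_mono) auto
  show "0 \<le> cond_prob M A x" unfolding cond_prob_def by simp
  show "cond_prob M A x \<le> 1" unfolding cond_prob_def
    using le measure_nonneg[of M "cyl x"] by (cases "measure M (cyl x) = 0") (auto simp: divide_le_eq_1 less_le)
qed

lemma tv_upper:
  fixes \<mu> \<rho> :: "('a::finite) stream measure"
  assumes "seq_prob \<mu>" "seq_prob \<rho>" "A \<in> cyl_sets"
  shows "\<bar>cond_prob \<rho> A x - cond_prob \<mu> A x\<bar> \<le> tv_dist \<mu> \<rho> x"
proof -
  have fm: "finite_measure \<mu>" "finite_measure \<rho>" and s: "sets \<mu> = cyl_sets" "sets \<rho> = cyl_sets"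
    using assms unfolding seq_prob_def by (auto intro: prob_space.finite_measure)
  have "\<And>B :: 'a stream set. B \<in> cyl_sets \<Longrightarrow> \<bar>cond_prob \<rho> B x - cond_prob \<mu> B x\<bar> \<le> 1"
  proof -
    fix B :: "'a stream set" assume B: "B \<in> cyl_sets"
    show "\<bar>cond_prob \<rho> B x - cond_prob \<mu> B x\<bar> \<le> 1"
      using cond_prob_bounds[OF fm(1), of B x] cond_prob_bounds[OF fm(2), of B x] B s by auto
  qed
  then have "bdd_above ((\<lambda>B. \<bar>cond_prob \<rho> B x - cond_prob \<mu> B x\<bar>) ` cyl_sets)"
    by (intro bdd_aboveI[of _ 1]) auto
  then show ?thesis unfolding tv_dist_def using assms(3) by (rule cSUP_upper2) simp
qed

lemma tv_least:
  fixes \<mu> \<rho> :: "('a::finite) stream measure"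
  assumes "\<And>A. A \<in> cyl_sets \<Longrightarrow> \<bar>cond_prob \<rho> A x - cond_prob \<mu> A x\<bar> \<le> B"
  shows "tv_dist \<mu> \<rho> x \<le> B"
  unfolding tv_dist_def by (rule cSUP_least) (use assms in \<open>auto intro: UNIV_in_cyl_sets\<close>)

lemma tv_nonneg:
  fixes \<mu> \<rho> :: "('a::finite) stream measure"
  assumes "seq_prob \<mu>" "seq_prob \<rho>"
  shows "0 \<le> tv_dist \<mu> \<rho> x"
  using tv_upper[OF assms UNIV_in_cyl_sets, of x] by linarith

lemma cyl_sub_vimage:
  assumes "m \<le> n" "\<omega> \<in> stake m -` S"
  shows "cyl (stake n \<omega>) \<subseteq> stake m -` S"
proof
  fix \<omega>' assume "\<omega>' \<in> cyl (stake n \<omega>)"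
  then have "stake n \<omega>' = stake n \<omega>" by (simp add: cyl_def)
  then have "take m (stake n \<omega>') = take m (stake n \<omega>)" by simp
  then have "stake m \<omega>' = stake m \<omega>" using assms(1) by (simp add: take_stake min_def)
  then show "\<omega>' \<in> stake m -` S" using assms(2) by simp
qed

lemma UN_cyl_in:
  fixes W :: "('a::finite) list set"
  assumes "sets M = cyl_sets"
  shows "(\<Union>x\<in>W. cyl x) \<in> sets M"
  using assms by (intro sets.countable_UN'') auto

lemma maximal_real:
  fixes \<mu> \<alpha> :: "('a::finite) stream measure" and W :: "'a list set" and c :: real
  assumes fm: "finite_measure \<mu>" and fa: "finite_measure \<alpha>"
    and sm: "sets \<mu> = cyl_sets" and sa: "sets \<alpha> = cyl_sets" and c: "c > 0"
    and le: "\<And>x. x \<in> W \<Longrightarrow> c * measure \<mu> (cyl x) \<le> measure \<alpha> (cyl x)"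
  shows "c * measure \<mu> (\<Union>x\<in>W. cyl x) \<le> measure \<alpha> UNIV"
proof -
  interpret m: finite_measure \<mu> by (rule fm)
  interpret a: finite_measure \<alpha> by (rule fa)
  have "ennreal c * emeasure \<mu> (\<Union>x\<in>W. cyl x) \<le> emeasure \<alpha> UNIV"
  proof (rule maximal_ineq[OF sm sa])
    fix x assume "x \<in> W"
    then have "c * measure \<mu> (cyl x) \<le> measure \<alpha> (cyl x)" by (rule le)
    then show "ennreal c * emeasure \<mu> (cyl x) \<le> emeasure \<alpha> (cyl x)"
      using c by (simp add: m.emeasure_eq_measure a.emeasure_eq_measure ennreal_mult[symmetric])
  qed
  then have "ennreal (c * measure \<mu> (\<Union>x\<in>W. cyl x)) \<le> ennreal (measure \<alpha> UNIV)"
    using c by (simp add: m.emeasure_eq_measure a.emeasure_eq_measure ennreal_mult[symmetric])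
  then show ?thesis by (simp add: ennreal_le_iff)
qed

lemma predicts_ac:
  fixes \<mu> \<rho> :: "('a::finite) stream measure"
  assumes mp: "seq_prob \<mu>" and rp: "seq_prob \<rho>" and pr: "predicts_tv \<rho> \<mu>"
    and A: "A \<in> cyl_sets" and r0: "emeasure \<rho> A = 0"
  shows "emeasure \<mu> A = 0"
proof -
  interpret m: prob_space \<mu> using mp unfolding seq_prob_def by auto
  interpret r: prob_space \<rho> using rp unfolding seq_prob_def by auto
  have sm: "sets \<mu> = cyl_sets" and sr: "sets \<rho> = cyl_sets"
    using mp rp unfolding seq_prob_def by auto
  have fm: "finite_measure \<mu>" by unfold_locales
  have key: "measure \<mu> A \<le> 3 * \<delta>" if \<delta>: "\<delta> > 0" for \<delta>
  proof -
    obtain m S where mS: "measure \<mu> (sd A (stake m -` S)) < \<delta>"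
      using set_approx[OF sm fm A] \<delta> by blast
    define B where "B = stake m -` S"
    have Bin: "B \<in> cyl_sets" unfolding B_def by simp
    define D where "D = B - A"
    have Din: "D \<in> sets \<mu>" unfolding D_def using Bin A sm by (simp add: cyl_sets_Diff)
    define \<alpha> where "\<alpha> = density \<mu> (indicator D)"
    have sa: "sets \<alpha> = cyl_sets" unfolding \<alpha>_def using sm by simp
    have ea: "\<And>X. X \<in> sets \<mu> \<Longrightarrow> emeasure \<alpha> X = emeasure \<mu> (D \<inter> X)"
      unfolding \<alpha>_def using Din by (simp add: emeasure_restricted)
    have fa: "finite_measure \<alpha>"
    proof
      have "emeasure \<alpha> (space \<alpha>) = emeasure \<mu> (D \<inter> UNIV)"
        using ea[of UNIV] sa sm space_cyl[OF sa] by simp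
      then show "emeasure \<alpha> (space \<alpha>) \<noteq> \<infinity>" by simp
    qed
    interpret a: finite_measure \<alpha> by (rule fa)
    have ma: "\<And>X. X \<in> sets \<mu> \<Longrightarrow> measure \<alpha> X = measure \<mu> (D \<inter> X)"
      using ea by (simp add: a.emeasure_eq_measure m.emeasure_eq_measure)
    define W where "W = {x. m \<le> length x \<and> (1/2) * measure \<mu> (cyl x) \<le> measure \<alpha> (cyl x)}"
    define G where "G = (\<Union>x\<in>W. cyl x)"
    have Gin: "G \<in> sets \<mu>" unfolding G_def by (rule UN_cyl_in[OF sm])
    have "(1/2) * measure \<mu> G \<le> measure \<alpha> UNIV"
      unfolding G_def by (rule maximal_real[OF fm fa sm sa]) (auto simp: W_def)
    also have "\<dots> = measure \<mu> D" using ma[of UNIV] sm by simp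
    also have "\<dots> \<le> measure \<mu> (sd A B)"
      using Din A Bin sm by (intro m.finite_measure_mono) (auto simp: D_def sd_def)
    finally have G2: "measure \<mu> G \<le> 2 * \<delta>" using mS unfolding B_def by simp
    have AE1: "AE \<omega> in \<mu>. (\<lambda>n. tv_dist \<mu> \<rho> (stake n \<omega>)) \<longlonglongrightarrow> 0"
      using pr unfolding predicts_tv_def .
    have AE2: "AE \<omega> in \<mu>. \<forall>n. 0 < measure \<mu> (cyl (stake n \<omega>))"
      by (rule pos_prefixes[OF fm sm])
    have "AE \<omega> in \<mu>. \<omega> \<in> A \<inter> B \<longrightarrow> \<omega> \<in> G"
      using AE1 AE2
    proof eventually_elim
      case (elim \<omega>)
      show ?case
      proof (intro impI, rule ccontr)
        assume wAB: "\<omega> \<in> A \<inter> B" and wG: "\<omega> \<notin> G"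
        have big: "1/2 \<le> tv_dist \<mu> \<rho> (stake n \<omega>)" if n: "n \<ge> m" for n
        proof -
          define x where "x = stake n \<omega>"
          have lx: "length x = n" unfolding x_def by simp
          have wx: "\<omega> \<in> cyl x" unfolding x_def by (rule cyl_stake)
          have "x \<notin> W" using wx wG unfolding G_def by auto
          then have lt: "measure \<alpha> (cyl x) < (1/2) * measure \<mu> (cyl x)"
            using lx n unfolding W_def by auto
          have cB: "cyl x \<subseteq> B" unfolding x_def B_def using n wAB B_def by (intro cyl_sub_vimage) auto
          have cin: "cyl x \<in> sets \<mu>" using sm by simp
          have "measure \<mu> (cyl x) = measure \<mu> (A \<inter> cyl x) + measure \<mu> (cyl x - A)"
            using m.finite_measure_Diff'[OF cin, of A] A sm by (simp add: Int_commute)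
          moreover have "measure \<mu> (cyl x - A) \<le> measure \<alpha> (cyl x)"
          proof -
            have "cyl x - A \<subseteq> D \<inter> cyl x" using cB unfolding D_def by auto
            then have "measure \<mu> (cyl x - A) \<le> measure \<mu> (D \<inter> cyl x)"
              using Din cin by (intro m.finite_measure_mono) auto
            then show ?thesis using ma[OF cin] by simp
          qed
          ultimately have half: "(1/2) * measure \<mu> (cyl x) < measure \<mu> (A \<inter> cyl x)" using lt by linarith
          have pos: "0 < measure \<mu> (cyl x)" using elim(2) unfolding x_def by simp
          have "1/2 < cond_prob \<mu> A x"
            unfolding cond_prob_def using half pos by (simp add: field_simps)
          moreover have "cond_prob \<rho> A x = 0"
          proof -
            have "measure \<rho> (A \<inter> cyl x) \<le> measure \<rho> A"
              using A sr by (intro r.finite_measure_mono) auto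
            moreover have "measure \<rho> A = 0" using r0 by (simp add: r.emeasure_eq_measure)
            ultimately have "measure \<rho> (A \<inter> cyl x) = 0" using measure_nonneg[of \<rho> "A \<inter> cyl x"] by linarith
            then show ?thesis unfolding cond_prob_def by simp
          qed
          moreover have "\<bar>cond_prob \<rho> A x - cond_prob \<mu> A x\<bar> \<le> tv_dist \<mu> \<rho> x"
            by (rule tv_upper[OF mp rp A])
          ultimately show ?thesis unfolding x_def by linarith
        qed
        from elim(1) have "\<exists>N. \<forall>n\<ge>N. norm (tv_dist \<mu> \<rho> (stake n \<omega>) - 0) < 1/2"
          by (intro LIMSEQ_D) auto
        then obtain N where N: "\<And>n. n \<ge> N \<Longrightarrow> \<bar>tv_dist \<mu> \<rho> (stake n \<omega>)\<bar> < 1/2" by auto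
        have "1/2 \<le> tv_dist \<mu> \<rho> (stake (max m N) \<omega>)" by (rule big) simp
        moreover have "\<bar>tv_dist \<mu> \<rho> (stake (max m N) \<omega>)\<bar> < 1/2" by (rule N) simp
        ultimately show False by linarith
      qed
    qed
    then have "measure \<mu> (A \<inter> B) \<le> measure \<mu> G"
      using Gin A Bin sm by (intro m.finite_measure_mono_AE) (auto intro: sets.Int)
    moreover have "measure \<mu> A \<le> measure \<mu> (A \<inter> B) + measure \<mu> (A - B)"
    proof -
      have "measure \<mu> A \<le> measure \<mu> ((A \<inter> B) \<union> (A - B))"
        using A Bin sm by (intro m.finite_measure_mono) (auto simp: cyl_sets_Diff intro: sets.Int)
      also have "\<dots> \<le> measure \<mu> (A \<inter> B) + measure \<mu> (A - B)"
        using A Bin sm by (intro measure_subadditive) (auto simp: cyl_sets_Diff intro: sets.Int)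
      finally show ?thesis .
    qed
    moreover have "measure \<mu> (A - B) \<le> measure \<mu> (sd A B)"
      using A Bin sm by (intro m.finite_measure_mono) (auto simp: sd_def cyl_sets_Diff cyl_sets_Un)
    ultimately show ?thesis using G2 mS unfolding B_def by linarith
  qed
  have "measure \<mu> A \<le> 0"
  proof (rule ccontr)
    assume "\<not> measure \<mu> A \<le> 0"
    then have "0 < measure \<mu> A / 6" by simp
    from key[OF this] show False using \<open>\<not> measure \<mu> A \<le> 0\<close> by linarith
  qed
  then have "measure \<mu> A = 0" using measure_nonneg[of \<mu> A] by linarith
  then show ?thesis by (simp add: m.emeasure_eq_measure)
qed

lemma density_real:
  fixes \<mu> \<nu> :: "('a::finite) stream measure"
  assumes mp: "seq_prob \<mu>" and np: "seq_prob \<nu>"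
    and ac: "\<forall>A\<in>cyl_sets. emeasure \<nu> A = 0 \<longrightarrow> emeasure \<mu> A = 0"
  obtains z where "z \<in> borel_measurable \<nu>" "\<And>\<omega>. 0 \<le> z \<omega>" "integrable \<nu> z"
    "\<And>E. E \<in> cyl_sets \<Longrightarrow> measure \<mu> E = (\<integral>\<omega>. z \<omega> * indicator E \<omega> \<partial>\<nu>)"
proof -
  interpret m: prob_space \<mu> using mp unfolding seq_prob_def by auto
  interpret n: prob_space \<nu> using np unfolding seq_prob_def by auto
  have sm: "sets \<mu> = cyl_sets" and sn: "sets \<nu> = cyl_sets" and spn: "space \<nu> = UNIV"
    using mp np unfolding seq_prob_def by auto
  have acc: "absolutely_continuous \<nu> \<mu>"
    unfolding absolutely_continuous_def using ac sn sm by (auto simp: null_sets_def)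
  have ss: "sets \<mu> = sets \<nu>" using sm sn by simp
  define f where "f = RN_deriv \<nu> \<mu>"
  have fm: "f \<in> borel_measurable \<nu>" unfolding f_def by simp
  have dens: "density \<nu> f = \<mu>" unfolding f_def by (rule n.density_RN_deriv[OF acc ss])
  have fin: "AE \<omega> in \<nu>. f \<omega> \<noteq> \<infinity>" unfolding f_def
    by (rule n.RN_deriv_finite[OF _ acc ss]) unfold_locales
  define z where "z \<omega> = enn2real (f \<omega>)" for \<omega>
  have zm: "z \<in> borel_measurable \<nu>" unfolding z_def using fm by simp
  have z0: "\<And>\<omega>. 0 \<le> z \<omega>" unfolding z_def by simp
  have fz: "AE \<omega> in \<nu>. f \<omega> = ennreal (z \<omega>)" using fin unfolding z_def
    by eventually_elim (simp add: less_top)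
  have dens2: "density \<nu> (\<lambda>\<omega>. ennreal (z \<omega>)) = \<mu>"
    using density_cong[OF fm _ fz] zm dens by simp
  have em: "\<And>E. E \<in> sets \<nu> \<Longrightarrow> emeasure \<mu> E = (\<integral>\<^sup>+\<omega>. ennreal (z \<omega> * indicator E \<omega>) \<partial>\<nu>)"
  proof -
    fix E assume E: "E \<in> sets \<nu>"
    have "emeasure \<mu> E = emeasure (density \<nu> (\<lambda>\<omega>. ennreal (z \<omega>))) E" using dens2 by simp
    also have "\<dots> = (\<integral>\<^sup>+\<omega>. ennreal (z \<omega>) * indicator E \<omega> \<partial>\<nu>)"
      using E zm by (simp add: emeasure_density)
    also have "\<dots> = (\<integral>\<^sup>+\<omega>. ennreal (z \<omega> * indicator E \<omega>) \<partial>\<nu>)"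
      by (intro nn_integral_cong) (simp add: indicator_def)
    finally show "emeasure \<mu> E = (\<integral>\<^sup>+\<omega>. ennreal (z \<omega> * indicator E \<omega>) \<partial>\<nu>)" .
  qed
  have zint: "integrable \<nu> z"
  proof (rule integrableI_nonneg[OF zm])
    show "AE x in \<nu>. 0 \<le> z x" using z0 by simp
    have "(\<integral>\<^sup>+\<omega>. ennreal (z \<omega>) \<partial>\<nu>) = (\<integral>\<^sup>+\<omega>. ennreal (z \<omega> * indicator UNIV \<omega>) \<partial>\<nu>)" by simp
    also have "\<dots> = emeasure \<mu> UNIV" using em[of UNIV] sn by simp
    finally show "(\<integral>\<^sup>+\<omega>. ennreal (z \<omega>) \<partial>\<nu>) < \<infinity>" by (simp add: m.emeasure_eq_measure)
  qed
  show ?thesis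
  proof (rule that[OF zm z0 zint])
    fix E :: "'a stream set" assume E: "E \<in> cyl_sets"
    have int: "integrable \<nu> (\<lambda>\<omega>. z \<omega> * indicator E \<omega>)"
      using E sn zint by (intro integrable_real_mult_indicator) auto
    have "emeasure \<mu> E = ennreal (\<integral>\<omega>. z \<omega> * indicator E \<omega> \<partial>\<nu>)"
      using em[of E] E sn nn_integral_eq_integral[OF int] z0 by simp
    moreover have "0 \<le> (\<integral>\<omega>. z \<omega> * indicator E \<omega> \<partial>\<nu>)" using z0 by (intro integral_nonneg_AE) auto
    ultimately show "measure \<mu> E = (\<integral>\<omega>. z \<omega> * indicator E \<omega> \<partial>\<nu>)"
      by (simp add: m.emeasure_eq_measure)
  qed
qed

lemma density_measure_real:
  fixes M :: "'b measure"
  assumes hm: "h \<in> borel_measurable M" and h0: "\<And>\<omega>. 0 \<le> h \<omega>" and hi: "integrable M h"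
  shows "finite_measure (density M (\<lambda>\<omega>. ennreal (h \<omega>)))"
    and "X \<in> sets M \<Longrightarrow> measure (density M (\<lambda>\<omega>. ennreal (h \<omega>))) X = (\<integral>\<omega>. h \<omega> * indicator X \<omega> \<partial>M)"
proof -
  have em: "emeasure (density M (\<lambda>\<omega>. ennreal (h \<omega>))) X = ennreal (\<integral>\<omega>. h \<omega> * indicator X \<omega> \<partial>M)"
    if X: "X \<in> sets M" for X
  proof -
    have int: "integrable M (\<lambda>\<omega>. h \<omega> * indicator X \<omega>)"
      using X hi by (intro integrable_real_mult_indicator) auto
    have "emeasure (density M (\<lambda>\<omega>. ennreal (h \<omega>))) X = (\<integral>\<^sup>+\<omega>. ennreal (h \<omega>) * indicator X \<omega> \<partial>M)"
      using X hm by (simp add: emeasure_density)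
    also have "\<dots> = (\<integral>\<^sup>+\<omega>. ennreal (h \<omega> * indicator X \<omega>) \<partial>M)"
      by (intro nn_integral_cong) (simp add: indicator_def)
    also have "\<dots> = ennreal (\<integral>\<omega>. h \<omega> * indicator X \<omega> \<partial>M)"
      using nn_integral_eq_integral[OF int] h0 by simp
    finally show ?thesis .
  qed
  show "finite_measure (density M (\<lambda>\<omega>. ennreal (h \<omega>)))"
  proof
    show "emeasure (density M (\<lambda>\<omega>. ennreal (h \<omega>))) (space (density M (\<lambda>\<omega>. ennreal (h \<omega>)))) \<noteq> \<infinity>"
      using em[of "space M"] by simp
  qed
  show "measure (density M (\<lambda>\<omega>. ennreal (h \<omega>))) X = (\<integral>\<omega>. h \<omega> * indicator X \<omega> \<partial>M)"
    if "X \<in> sets M"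
  proof -
    have "0 \<le> (\<integral>\<omega>. h \<omega> * indicator X \<omega> \<partial>M)" using h0 by (intro integral_nonneg_AE) auto
    then show ?thesis using em[OF that] by (simp add: measure_def)
  qed
qed

lemma ratio_bound:
  fixes a b p q y e :: real
  assumes "\<bar>a - y * p\<bar> \<le> e" "\<bar>b - y * q\<bar> \<le> e" "0 \<le> p" "p \<le> q" "0 < q" "0 < b"
  shows "\<bar>p / q - a / b\<bar> \<le> 2 * e / b"
proof -
  have e0: "0 \<le> e" using assms(1) by linarith
  have "a * q - p * b = (a - y * p) * q - p * (b - y * q)" by (simp add: algebra_simps)
  then have "\<bar>a * q - p * b\<bar> = \<bar>(a - y * p) * q - p * (b - y * q)\<bar>" by simp
  also have "\<dots> \<le> \<bar>(a - y * p) * q\<bar> + \<bar>p * (b - y * q)\<bar>" by (rule abs_triangle_ineq4)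
  also have "\<dots> = \<bar>a - y * p\<bar> * q + p * \<bar>b - y * q\<bar>"
    using assms(3,5) by (simp add: abs_mult)
  also have "\<dots> \<le> e * q + q * e"
    using assms e0 by (intro add_mono mult_mono) auto
  finally have h: "\<bar>a * q - p * b\<bar> \<le> 2 * e * q" by simp
  have "p / q - a / b = (p * b - a * q) / (q * b)" using assms(5,6) by (simp add: field_simps)
  then have "\<bar>p / q - a / b\<bar> = \<bar>a * q - p * b\<bar> / (q * b)" using assms(5,6) by (simp add: abs_minus_commute)
  also have "\<dots> \<le> 2 * e * q / (q * b)" using h assms(5,6) by (intro divide_right_mono) auto
  also have "\<dots> = 2 * e / b" using assms(5,6) by simp
  finally show ?thesis .
qed

lemma key_bound:
  fixes \<nu> :: "('a::finite) stream measure"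
  assumes fn: "finite_measure \<nu>" and sn: "sets \<nu> = cyl_sets" and zint: "integrable \<nu> z"
    and E: "E \<in> cyl_sets" and Ec: "E \<subseteq> cyl x" and mx: "m \<le> length x"
  shows "\<bar>(\<integral>\<omega>. z \<omega> * indicator E \<omega> \<partial>\<nu>) - g (take m x) * measure \<nu> E\<bar>
     \<le> (\<integral>\<omega>. \<bar>z \<omega> - g (stake m \<omega>)\<bar> * indicator E \<omega> \<partial>\<nu>)"
proof -
  interpret n: finite_measure \<nu> by (rule fn)
  have spn: "space \<nu> = UNIV" by (rule space_cyl[OF sn])
  have En: "E \<in> sets \<nu>" using E sn by simp
  define y where "y = g (take m x)"
  have i1: "integrable \<nu> (\<lambda>\<omega>. z \<omega> * indicator E \<omega>)"
    using En zint by (rule integrable_real_mult_indicator)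
  have i2: "integrable \<nu> (\<lambda>\<omega>. y * indicator E \<omega>)"
    using En by (intro integrable_real_mult_indicator) auto
  have i3: "integrable \<nu> (\<lambda>\<omega>. \<bar>z \<omega> - g (stake m \<omega>)\<bar> * indicator E \<omega>)"
    using En zint cf_integrable[OF sn fn, of g m] by (intro integrable_real_mult_indicator) auto
  have mE: "y * measure \<nu> E = (\<integral>\<omega>. y * indicator E \<omega> \<partial>\<nu>)"
    using spn by simp
  have pw: "z \<omega> * indicator E \<omega> - y * indicator E \<omega> = (z \<omega> - g (stake m \<omega>)) * indicator E \<omega>" for \<omega>
  proof (cases "\<omega> \<in> E")
    case True
    then have "\<omega> \<in> cyl x" using Ec by auto
    then have "stake (length x) \<omega> = x" by (simp add: cyl_def)
    then have "take m (stake (length x) \<omega>) = take m x" by simp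
    then have "stake m \<omega> = take m x" using mx by (simp add: take_stake min_def)
    then show ?thesis using True unfolding y_def by simp
  qed simp
  have "(\<integral>\<omega>. z \<omega> * indicator E \<omega> \<partial>\<nu>) - y * measure \<nu> E
      = (\<integral>\<omega>. z \<omega> * indicator E \<omega> - y * indicator E \<omega> \<partial>\<nu>)"
    unfolding mE using i1 i2 by simp
  also have "\<dots> = (\<integral>\<omega>. (z \<omega> - g (stake m \<omega>)) * indicator E \<omega> \<partial>\<nu>)"
    unfolding pw ..
  finally have eq: "(\<integral>\<omega>. z \<omega> * indicator E \<omega> \<partial>\<nu>) - y * measure \<nu> E
      = (\<integral>\<omega>. (z \<omega> - g (stake m \<omega>)) * indicator E \<omega> \<partial>\<nu>)" .
  have i4: "integrable \<nu> (\<lambda>\<omega>. (z \<omega> - g (stake m \<omega>)) * indicator E \<omega>)"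
    using En zint cf_integrable[OF sn fn, of g m] by (intro integrable_real_mult_indicator) auto
  have "\<bar>\<integral>\<omega>. (z \<omega> - g (stake m \<omega>)) * indicator E \<omega> \<partial>\<nu>\<bar>
      \<le> (\<integral>\<omega>. \<bar>(z \<omega> - g (stake m \<omega>)) * indicator E \<omega>\<bar> \<partial>\<nu>)"
    by (rule integral_abs_bound)
  also have "\<dots> = (\<integral>\<omega>. \<bar>z \<omega> - g (stake m \<omega>)\<bar> * indicator E \<omega> \<partial>\<nu>)"
    by (intro Bochner_Integration.integral_cong) (auto simp: abs_mult)
  finally have "\<bar>\<integral>\<omega>. (z \<omega> - g (stake m \<omega>)) * indicator E \<omega> \<partial>\<nu>\<bar>
      \<le> (\<integral>\<omega>. \<bar>z \<omega> - g (stake m \<omega>)\<bar> * indicator E \<omega> \<partial>\<nu>)" .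
  then show ?thesis using eq unfolding y_def by simp
qed

lemma bd_lambda:
  fixes \<mu> \<nu> :: "('a::finite) stream measure"
  assumes mp: "seq_prob \<mu>" and np: "seq_prob \<nu>"
    and ac: "\<forall>A\<in>cyl_sets. emeasure \<nu> A = 0 \<longrightarrow> emeasure \<mu> A = 0"
    and lam: "l > 0"
  shows "AE \<omega> in \<mu>. \<exists>m. \<forall>n\<ge>m. tv_dist \<mu> \<nu> (stake n \<omega>) \<le> 2 * l"
proof -
  interpret m: prob_space \<mu> using mp unfolding seq_prob_def by auto
  interpret n: prob_space \<nu> using np unfolding seq_prob_def by auto
  have sm: "sets \<mu> = cyl_sets" and sn: "sets \<nu> = cyl_sets"
    using mp np unfolding seq_prob_def by auto
  have fm: "finite_measure \<mu>" and fn: "finite_measure \<nu>" by unfold_locales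
  obtain z where zm: "z \<in> borel_measurable \<nu>" and z0: "\<And>\<omega>. 0 \<le> z \<omega>" and zint: "integrable \<nu> z"
    and zmu: "\<And>E. E \<in> cyl_sets \<Longrightarrow> measure \<mu> E = (\<integral>\<omega>. z \<omega> * indicator E \<omega> \<partial>\<nu>)"
    using density_real[OF mp np ac] by metis
  have "\<forall>j::nat. \<exists>m g. (\<integral>\<omega>. \<bar>z \<omega> - g (stake m \<omega>)\<bar> \<partial>\<nu>) < l / real (Suc j)"
    using fun_approx[OF sn fn zint] lam by simp
  then obtain mm gg where mg: "\<And>j. (\<integral>\<omega>. \<bar>z \<omega> - gg j (stake (mm j) \<omega>)\<bar> \<partial>\<nu>) < l / real (Suc j)"
    by metis
  define h where "h j \<omega> = \<bar>z \<omega> - gg j (stake (mm j) \<omega>)\<bar>" for j \<omega>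
  have hm: "\<And>j. h j \<in> borel_measurable \<nu>" unfolding h_def using zm cf_measurable[OF sn] by measurable
  have h0: "\<And>j \<omega>. 0 \<le> h j \<omega>" unfolding h_def by simp
  have hi: "\<And>j. integrable \<nu> (h j)" unfolding h_def using zint cf_integrable[OF sn fn] by auto
  define \<alpha> where "\<alpha> j = density \<nu> (\<lambda>\<omega>. ennreal (h j \<omega>))" for j
  have fa: "\<And>j. finite_measure (\<alpha> j)" unfolding \<alpha>_def by (rule density_measure_real(1)[OF hm h0 hi])
  have sa: "\<And>j. sets (\<alpha> j) = cyl_sets" unfolding \<alpha>_def using sn by simp
  have ma: "\<And>j X. X \<in> cyl_sets \<Longrightarrow> measure (\<alpha> j) X = (\<integral>\<omega>. h j \<omega> * indicator X \<omega> \<partial>\<nu>)"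
    unfolding \<alpha>_def using sn by (intro density_measure_real(2)[OF hm h0 hi]) auto
  define W where "W j = {x. mm j \<le> length x \<and> l * measure \<mu> (cyl x) \<le> measure (\<alpha> j) (cyl x)}" for j
  define G where "G j = (\<Union>x\<in>W j. cyl x)" for j
  have Gin: "\<And>j. G j \<in> sets \<mu>" unfolding G_def by (rule UN_cyl_in[OF sm])
  have Gm: "measure \<mu> (G j) \<le> 1 / real (Suc j)" for j
  proof -
    have "l * measure \<mu> (G j) \<le> measure (\<alpha> j) UNIV"
      unfolding G_def by (rule maximal_real[OF fm fa sm sa lam]) (auto simp: W_def)
    also have "\<dots> = (\<integral>\<omega>. h j \<omega> \<partial>\<nu>)" using ma[of UNIV j] by simp
    also have "\<dots> < l / real (Suc j)" using mg[of j] unfolding h_def .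
    finally have "l * measure \<mu> (G j) < l * (1 / real (Suc j))" by simp
    then have "measure \<mu> (G j) < 1 / real (Suc j)" using lam mult_less_cancel_left_pos by blast
    then show ?thesis by (rule less_imp_le)
  qed
  define H where "H = (\<Inter>j. G j)"
  have Hin: "H \<in> sets \<mu>" unfolding H_def using Gin by auto
  have "measure \<mu> H \<le> 0"
  proof (rule le_of_approx)
    fix j
    have "measure \<mu> H \<le> measure \<mu> (G j)" unfolding H_def using Gin Hin H_def
      by (intro m.finite_measure_mono) auto
    then show "measure \<mu> H - 1 / real (Suc j) \<le> 0" using Gm[of j] by simp
  qed
  then have "measure \<mu> H = 0" using measure_nonneg[of \<mu> H] by linarith
  then have Hnull: "H \<in> null_sets \<mu>" using Hin by (simp add: null_sets_def m.emeasure_eq_measure)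
  have AE2: "AE \<omega> in \<mu>. \<forall>n. 0 < measure \<mu> (cyl (stake n \<omega>))" by (rule pos_prefixes[OF fm sm])
  show ?thesis
    using AE_not_in[OF Hnull] AE2
  proof eventually_elim
    case (elim \<omega>)
    then obtain j where wG: "\<omega> \<notin> G j" unfolding H_def by auto
    show ?case
    proof (intro exI[of _ "mm j"] allI impI)
      fix n assume n: "mm j \<le> n"
      define x where "x = stake n \<omega>"
      define c where "c = cyl x"
      have lx: "length x = n" unfolding x_def by simp
      have wc: "\<omega> \<in> c" unfolding c_def x_def by (rule cyl_stake)
      have "x \<notin> W j" using wc wG unfolding G_def c_def by auto
      then have lt: "measure (\<alpha> j) c < l * measure \<mu> c" using lx n unfolding W_def c_def by auto
      have bpos: "0 < measure \<mu> c" using elim(2) unfolding c_def x_def by simp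
      have cin: "c \<in> cyl_sets" unfolding c_def by simp
      have qpos: "0 < measure \<nu> c"
      proof (rule ccontr)
        assume "\<not> 0 < measure \<nu> c"
        then have "measure \<nu> c = 0" using measure_nonneg[of \<nu> c] by linarith
        then have "emeasure \<nu> c = 0" by (simp add: n.emeasure_eq_measure)
        then have "emeasure \<mu> c = 0" using ac cin by blast
        then show False using bpos by (simp add: m.emeasure_eq_measure)
      qed
      have kb: "\<bar>measure \<mu> E - gg j (take (mm j) x) * measure \<nu> E\<bar> \<le> measure (\<alpha> j) c"
        if E: "E \<in> cyl_sets" "E \<subseteq> c" for E
      proof -
        have "\<bar>measure \<mu> E - gg j (take (mm j) x) * measure \<nu> E\<bar> \<le> (\<integral>\<omega>. h j \<omega> * indicator E \<omega> \<partial>\<nu>)"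
          using key_bound[OF fn sn zint E(1) E(2)[unfolded c_def], of "mm j" "gg j"] lx n zmu[OF E(1)]
          unfolding h_def by simp
        also have "\<dots> = measure (\<alpha> j) E" using ma[OF E(1)] by simp
        also have "\<dots> \<le> measure (\<alpha> j) c"
          using E cin sa by (intro finite_measure.finite_measure_mono[OF fa]) auto
        finally show ?thesis .
      qed
      show "tv_dist \<mu> \<nu> (stake n \<omega>) \<le> 2 * l"
        unfolding x_def[symmetric]
      proof (rule tv_least)
        fix A :: "'a stream set" assume A: "A \<in> cyl_sets"
        have Ac: "A \<inter> c \<in> cyl_sets" using A cin sm by (metis sets.Int)
        have pq: "measure \<nu> (A \<inter> c) \<le> measure \<nu> c" using Ac cin sn by (intro n.finite_measure_mono) auto
        have "\<bar>measure \<nu> (A \<inter> c) / measure \<nu> c - measure \<mu> (A \<inter> c) / measure \<mu> c\<bar>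
            \<le> 2 * measure (\<alpha> j) c / measure \<mu> c"
          by (rule ratio_bound[OF kb[OF Ac] kb[OF cin] measure_nonneg pq qpos bpos]) auto
        also have "\<dots> \<le> 2 * l" using lt bpos by (simp add: divide_le_eq)
        finally show "\<bar>cond_prob \<nu> A x - cond_prob \<mu> A x\<bar> \<le> 2 * l"
          unfolding cond_prob_def c_def by simp
      qed
    qed
  qed
qed

lemma bd:
  fixes \<mu> \<nu> :: "('a::finite) stream measure"
  assumes mp: "seq_prob \<mu>" and np: "seq_prob \<nu>"
    and ac: "\<forall>A\<in>cyl_sets. emeasure \<nu> A = 0 \<longrightarrow> emeasure \<mu> A = 0"
  shows "predicts_tv \<nu> \<mu>"
proof -
  have "AE \<omega> in \<mu>. \<forall>i::nat. \<exists>m. \<forall>n\<ge>m. tv_dist \<mu> \<nu> (stake n \<omega>) \<le> 2 * (1 / real (Suc i))"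
    unfolding AE_all_countable by (intro allI bd_lambda[OF mp np ac]) simp
  then show ?thesis unfolding predicts_tv_def
  proof eventually_elim
    case (elim \<omega>)
    show ?case
    proof (rule LIMSEQ_I)
      fix r :: real assume r: "0 < r"
      then obtain i where i: "inverse (real (Suc i)) < r / 2" using reals_Archimedean[of "r/2"] by auto
      obtain m where m: "\<And>n. n \<ge> m \<Longrightarrow> tv_dist \<mu> \<nu> (stake n \<omega>) \<le> 2 * (1 / real (Suc i))"
        using elim by blast
      show "\<exists>no. \<forall>n\<ge>no. norm (tv_dist \<mu> \<nu> (stake n \<omega>) - 0) < r"
      proof (intro exI allI impI)
        fix n assume "m \<le> n"
        then have "tv_dist \<mu> \<nu> (stake n \<omega>) \<le> 2 * (1 / real (Suc i))" by (rule m)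
        moreover have "0 \<le> tv_dist \<mu> \<nu> (stake n \<omega>)" by (rule tv_nonneg[OF mp np])
        ultimately show "norm (tv_dist \<mu> \<nu> (stake n \<omega>) - 0) < r"
          using i by (simp add: inverse_eq_divide)
      qed
    qed
  qed
qed

theorem theorem1:
  fixes C :: "('a::finite) stream measure set"
    and \<rho> :: "'a stream measure"
  assumes "C \<noteq> {}"
    and "\<forall>\<mu>\<in>C. seq_prob \<mu>"
    and "seq_prob \<rho>"
    and "\<forall>\<mu>\<in>C. predicts_tv \<rho> \<mu>"
  shows "\<exists>\<mu>s :: nat \<Rightarrow> 'a stream measure. (\<forall>k. \<mu>s k \<in> C) \<and>
           (\<forall>w :: nat \<Rightarrow> real. (\<forall>k. w k > 0) \<and> w sums 1 \<longrightarrow>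
              (\<forall>\<mu>\<in>C. predicts_tv (mixture w \<mu>s) \<mu>))"
proof -
  have ac: "\<forall>\<mu>\<in>C. \<forall>A\<in>cyl_sets. emeasure \<rho> A = 0 \<longrightarrow> emeasure \<mu> A = 0"
    using predicts_ac[OF _ assms(3)] assms(2,4) by metis
  obtain \<mu>s :: "nat \<Rightarrow> 'a stream measure" where \<mu>sC: "\<forall>k. \<mu>s k \<in> C"
    and hs: "\<forall>\<mu>\<in>C. \<forall>A\<in>cyl_sets. (\<forall>k. emeasure (\<mu>s k) A = 0) \<longrightarrow> emeasure \<mu> A = 0"
    using halmos_savage[OF assms(1,2,3) ac] by blast
  have sp: "\<And>k. seq_prob (\<mu>s k)" using \<mu>sC assms(2) by blast
  have sm: "\<And>k. sets (\<mu>s k) = cyl_sets" using sp unfolding seq_prob_def by blast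
  have "\<forall>w :: nat \<Rightarrow> real. (\<forall>k. w k > 0) \<and> w sums 1 \<longrightarrow> (\<forall>\<mu>\<in>C. predicts_tv (mixture w \<mu>s) \<mu>)"
  proof (intro allI impI ballI)
    fix w :: "nat \<Rightarrow> real" and \<mu>
    assume w: "(\<forall>k. w k > 0) \<and> w sums 1" and \<mu>: "\<mu> \<in> C"
    have np: "seq_prob (mixture w \<mu>s)"
      using w by (intro mixture_prob[OF sp]) (auto intro: less_imp_le)
    have mp: "seq_prob \<mu>" using \<mu> assms(2) by blast
    have "\<forall>A\<in>cyl_sets. emeasure (mixture w \<mu>s) A = 0 \<longrightarrow> emeasure \<mu> A = 0"
    proof (intro ballI impI)
      fix A assume A: "A \<in> cyl_sets" and "emeasure (mixture w \<mu>s) A = 0"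
      have "emeasure (mixture w \<mu>s) A = 0 \<longleftrightarrow> (\<forall>k. emeasure (\<mu>s k) A = 0)"
        by (rule mixture_null) (use sm w A in auto)
      then have "\<forall>k. emeasure (\<mu>s k) A = 0" using \<open>emeasure (mixture w \<mu>s) A = 0\<close> by blast
      then show "emeasure \<mu> A = 0" using hs \<mu> A by blast
    qed
    then show "predicts_tv (mixture w \<mu>s) \<mu>" by (rule bd[OF mp np])
  qed
  with \<mu>sC show ?thesis by (intro exI[of _ \<mu>s] conjI)
qed

end
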